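(* Let $\mathcal G$ be a synchronous game. Then $\mathcal I(\mathcal G)$ is a hereditary subspace of $\mathbb C[\mathbb F(n,m)]$ if and only if $\mathcal A(\mathcal G)^+\cap(-\mathcal A(\mathcal G)^+)=(0)$.
   Context: A synchronous game $\mathcal G=(I,O,\lambda)$: finite sets $I,O$ with $|I|=n$, $|O|=m$ ($O=\{0,\dots,m-1\}$), $\lambda:I\times I\times O\times O\to\{0,1\}$ with $\lambda(v,v,a,b)=1$ iff $a=b$. Let $\mathbb F(n,m)$ be the free product of $n$ copies of the cyclic group of order $m$ with generators $u_v$, $\mathbb C[\mathbb F(n,m)]$ its group $*$-algebra, $\omega=e^{2\pi i/m}$, $e_{v,a}=\frac1m\sum_{k=0}^{m-1}(\omega^{-a}u_v)^k$. $\mathcal I(\mathcal G)$ is the two-sided $*$-ideal generated by $\{e_{v,a}e_{w,b}:\lambda(v,w,a,b)=0\}$ and $\mathcal A(\mathcal G)=\mathbb C[\mathbb F(n,m)]/\mathcal I(\mathcal G)$. Let $\mathcal P$ be the cone of finite sums of elements $f^*f$, $f\in\mathbb C[\mathbb F(n,m)]$; for self-adjoint $h,k$ write $h\le k$ if $k-h\in\mathcal P$. A self-adjoint subspace $V$ is hereditary if $0\le f\le h$ and $h\in V$ imply $f\in V$. $\mathcal A(\mathcal G)^+=\{p+\mathcal I(\mathcal G):p\in\mathcal P\}$. *)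

theory Defs
  imports Complex_Main
begin

text \<open>A letter (v,k) stands for u_v^k. A reduced word over I has letters with
v in I and 0 < k < m, and no two consecutive letters with the same generator.\<close>

type_synonym 'i word = "('i \<times> nat) list"

definition reduced_words :: "'i set \<Rightarrow> nat \<Rightarrow> 'i word set" where
  "reduced_words I m = {w. (\<forall>(v,k)\<in>set w. v \<in> I \<and> 0 < k \<and> k < m)
                          \<and> successively (\<lambda>x y. fst x \<noteq> fst y) w}"

definition cons_letter :: "nat \<Rightarrow> 'i \<times> nat \<Rightarrow> 'i word \<Rightarrow> 'i word" where
  "cons_letter m l w =
     (let v = fst l; k0 = snd l mod m in
      if k0 = 0 then w else
      (case w of
         [] \<Rightarrow> [(v,k0)]
       | (x # w') \<Rightarrow>
           (if fst x = v then
              (let s = (k0 + snd x) mod m in if s = 0 then w' else (v,s) # w')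
            else (v,k0) # w)))"

definition gmult :: "nat \<Rightarrow> 'i word \<Rightarrow> 'i word \<Rightarrow> 'i word" where
  "gmult m a b = foldr (cons_letter m) a b"

definition ginv :: "nat \<Rightarrow> 'i word \<Rightarrow> 'i word" where
  "ginv m w = rev (map (\<lambda>(v,k). (v, m - k)) w)"

type_synonym 'i ga = "'i word \<Rightarrow> complex"

definition ga_carrier :: "'i set \<Rightarrow> nat \<Rightarrow> 'i ga set" where
  "ga_carrier I m = {f. finite {w. f w \<noteq> 0} \<and> (\<forall>w. f w \<noteq> 0 \<longrightarrow> w \<in> reduced_words I m)}"

definition ga_zero :: "'i ga" where
  "ga_zero = (\<lambda>w. 0)"

definition ga_add :: "'i ga \<Rightarrow> 'i ga \<Rightarrow> 'i ga" where
  "ga_add f g = (\<lambda>w. f w + g w)"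

definition ga_smult :: "complex \<Rightarrow> 'i ga \<Rightarrow> 'i ga" where
  "ga_smult c f = (\<lambda>w. c * f w)"

definition ga_delta :: "'i word \<Rightarrow> 'i ga" where
  "ga_delta x = (\<lambda>w. if w = x then 1 else 0)"

definition ga_mult :: "nat \<Rightarrow> 'i ga \<Rightarrow> 'i ga \<Rightarrow> 'i ga" where
  "ga_mult m f g = (\<lambda>w. \<Sum>(a,b)\<in>{(a,b). f a \<noteq> 0 \<and> g b \<noteq> 0 \<and> gmult m a b = w}. f a * g b)"

definition ga_star :: "nat \<Rightarrow> 'i ga \<Rightarrow> 'i ga" where
  "ga_star m f = (\<lambda>w. cnj (f (ginv m w)))"

definition ga_one :: "'i ga" where
  "ga_one = ga_delta []"

fun ga_pow :: "nat \<Rightarrow> 'i ga \<Rightarrow> nat \<Rightarrow> 'i ga" where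
  "ga_pow m f 0 = ga_one"
| "ga_pow m f (Suc k) = ga_mult m f (ga_pow m f k)"

definition ga_sum :: "'b set \<Rightarrow> ('b \<Rightarrow> 'i ga) \<Rightarrow> 'i ga" where
  "ga_sum A F = (\<lambda>w. \<Sum>x\<in>A. F x w)"

definition gen_u :: "nat \<Rightarrow> 'i \<Rightarrow> 'i ga" where
  "gen_u m v = ga_delta (cons_letter m (v,1) [])"

definition omega :: "nat \<Rightarrow> complex" where
  "omega m = cis (2 * pi / real m)"

definition proj_e :: "nat \<Rightarrow> 'i \<Rightarrow> nat \<Rightarrow> 'i ga" where
  "proj_e m v a = ga_smult (1 / of_nat m)
      (ga_sum {..<m} (\<lambda>k. ga_pow m (ga_smult (inverse (omega m) ^ a) (gen_u m v)) k))"

inductive_set ga_ideal :: "'i set \<Rightarrow> nat \<Rightarrow> 'i ga set \<Rightarrow> 'i ga set"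
  for I m S where
  gen: "x \<in> S \<Longrightarrow> x \<in> ga_ideal I m S"
| zero: "ga_zero \<in> ga_ideal I m S"
| add: "x \<in> ga_ideal I m S \<Longrightarrow> y \<in> ga_ideal I m S \<Longrightarrow> ga_add x y \<in> ga_ideal I m S"
| smult: "x \<in> ga_ideal I m S \<Longrightarrow> ga_smult c x \<in> ga_ideal I m S"
| lmult: "a \<in> ga_carrier I m \<Longrightarrow> x \<in> ga_ideal I m S \<Longrightarrow> ga_mult m a x \<in> ga_ideal I m S"
| rmult: "a \<in> ga_carrier I m \<Longrightarrow> x \<in> ga_ideal I m S \<Longrightarrow> ga_mult m x a \<in> ga_ideal I m S"
| star: "x \<in> ga_ideal I m S \<Longrightarrow> ga_star m x \<in> ga_ideal I m S"

inductive_set ga_cone :: "'i set \<Rightarrow> nat \<Rightarrow> 'i ga set"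
  for I m where
  zero: "ga_zero \<in> ga_cone I m"
| step: "f \<in> ga_carrier I m \<Longrightarrow> p \<in> ga_cone I m \<Longrightarrow>
           ga_add (ga_mult m (ga_star m f) f) p \<in> ga_cone I m"

definition self_adjoint :: "'i set \<Rightarrow> nat \<Rightarrow> 'i ga \<Rightarrow> bool" where
  "self_adjoint I m h \<longleftrightarrow> h \<in> ga_carrier I m \<and> ga_star m h = h"

definition ga_le :: "'i set \<Rightarrow> nat \<Rightarrow> 'i ga \<Rightarrow> 'i ga \<Rightarrow> bool" where
  "ga_le I m h k \<longleftrightarrow> ga_add k (ga_smult (-1) h) \<in> ga_cone I m"

definition hereditary_subspace :: "'i set \<Rightarrow> nat \<Rightarrow> 'i ga set \<Rightarrow> bool" where
  "hereditary_subspace I m V \<longleftrightarrow>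
     V \<subseteq> ga_carrier I m \<and> ga_zero \<in> V
     \<and> (\<forall>x\<in>V. \<forall>y\<in>V. ga_add x y \<in> V) \<and> (\<forall>c. \<forall>x\<in>V. ga_smult c x \<in> V)
     \<and> (\<forall>x\<in>V. ga_star m x \<in> V)
     \<and> (\<forall>f h. self_adjoint I m f \<and> self_adjoint I m h \<and> ga_le I m ga_zero f \<and> ga_le I m f h
              \<and> h \<in> V \<longrightarrow> f \<in> V)"

definition game_ideal :: "'i set \<Rightarrow> nat \<Rightarrow> ('i \<Rightarrow> 'i \<Rightarrow> nat \<Rightarrow> nat \<Rightarrow> bool) \<Rightarrow> 'i ga set" where
  "game_ideal I m lam = ga_ideal I m
     {ga_mult m (proj_e m v a) (proj_e m w b) | v w a b.
        v \<in> I \<and> w \<in> I \<and> a < m \<and> b < m \<and> \<not> lam v w a b}"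

text \<open>Cosets x + J in the quotient algebra, and the positive cone A(G)^+.\<close>
definition ga_coset :: "'i ga set \<Rightarrow> 'i ga \<Rightarrow> 'i ga set" where
  "ga_coset J x = {ga_add x y | y. y \<in> J}"

definition quot_pos :: "'i set \<Rightarrow> nat \<Rightarrow> 'i ga set \<Rightarrow> 'i ga set set" where
  "quot_pos I m J = {ga_coset J p | p. p \<in> ga_cone I m}"

definition quot_neg :: "'i ga set set \<Rightarrow> 'i ga set set" where
  "quot_neg X = {(\<lambda>z. ga_smult (-1) z) ` C | C. C \<in> X}"

end

theory Submission
  imports Defs
begin


lemma red_Nil[simp]: "[] \<in> reduced_words I m"
  by (simp add: reduced_words_def)

lemma red_Cons: "(x # w) \<in> reduced_words I m \<longleftrightarrow>
   fst x \<in> I \<and> 0 < snd x \<and> snd x < m \<and> w \<in> reduced_words I m \<and> (w = [] \<or> fst x \<noteq> fst (hd w))"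
  by (cases x) (auto simp: reduced_words_def successively_Cons)

lemma cons_letter_red:
  assumes "w \<in> reduced_words I m" "v \<in> I" "0 < m"
  shows "cons_letter m (v,k) w \<in> reduced_words I m"
proof (cases w)
  case Nil
  then show ?thesis using assms by (auto simp: cons_letter_def Let_def red_Cons)
next
  case (Cons x w')
  then show ?thesis using assms
    by (cases x) (auto simp: cons_letter_def Let_def red_Cons)
qed

lemma cons_letter_mod: "cons_letter m (v, k mod m) w = cons_letter m (v,k) w"
  by (simp add: cons_letter_def)

lemma cons_letter_0: "k mod m = 0 \<Longrightarrow> cons_letter m (v,k) w = w"
  by (simp add: cons_letter_def)

lemma gmult_red:
  "a \<in> reduced_words I m \<Longrightarrow> b \<in> reduced_words I m \<Longrightarrow> gmult m a b \<in> reduced_words I m"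
proof (induction a)
  case Nil then show ?case by (simp add: gmult_def)
next
  case (Cons x a)
  then have "gmult m a b \<in> reduced_words I m" by (simp add: red_Cons)
  moreover have "fst x \<in> I" "0 < m" using Cons by (auto simp: red_Cons)
  ultimately show ?case using cons_letter_red[of "gmult m a b" I m "fst x" "snd x"]
    by (simp add: gmult_def)
qed

lemma mod2: "(x::nat) < 2*m \<Longrightarrow> x mod m = (if x < m then x else x - m)"
  by (cases "x < m") (auto simp: le_mod_geq)

lemma comp_letter_lt:
  assumes m: "0 < m" and w: "w \<in> reduced_words I m" and k: "k < m" "k' < m"
  shows "cons_letter m (v,k) (cons_letter m (v,k') w) = cons_letter m (v, (k+k') mod m) w"
proof (cases w)
  case Nil
  then show ?thesis using k m by (auto simp: cons_letter_def Let_def mod2)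
next
  case (Cons x w')
  obtain u j where x: "x = (u,j)" by force
  have j: "0 < j" "j < m" and hd: "w' = [] \<or> u \<noteq> fst (hd w')"
    using w Cons x by (auto simp: red_Cons)
  show ?thesis
  proof (cases "u = v")
    case False
    then show ?thesis using k m Cons x by (auto simp: cons_letter_def Let_def mod2)
  next
    case True
    then show ?thesis using k m Cons x j hd
      by (cases w') (auto simp: cons_letter_def Let_def mod2)
  qed
qed

lemma comp_letter:
  assumes m: "0 < m" and w: "w \<in> reduced_words I m"
  shows "cons_letter m (v,k) (cons_letter m (v,k') w) = cons_letter m (v, k+k') w"
proof -
  have "cons_letter m (v,k) (cons_letter m (v,k') w) =
        cons_letter m (v,k mod m) (cons_letter m (v,k' mod m) w)"
    by (simp add: cons_letter_mod)
  also have "\<dots> = cons_letter m (v, (k mod m + k' mod m) mod m) w"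
    using comp_letter_lt[OF m w] m by simp
  also have "\<dots> = cons_letter m (v, k + k') w"
    by (simp add: cons_letter_mod mod_add_eq)
  finally show ?thesis .
qed



lemma gmult_Cons: "gmult m (x # a) b = cons_letter m x (gmult m a b)"
  by (simp add: gmult_def)

lemma gmult_Nil: "gmult m [] b = b"
  by (simp add: gmult_def)

lemma gmult_append: "gmult m (a @ b) c = gmult m a (gmult m b c)"
  by (simp add: gmult_def)

lemma act_cons:
  assumes u: "u \<in> reduced_words I m" and w: "w \<in> reduced_words I m"
    and x: "fst x \<in> I" "0 < snd x" "snd x < m"
  shows "gmult m (cons_letter m x u) w = cons_letter m x (gmult m u w)"
proof -
  obtain v k where xv: "x = (v,k)" by force
  have m: "0 < m" using x by simp
  have km: "k mod m = k" "k \<noteq> 0" using x xv by auto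
  show ?thesis
  proof (cases u)
    case Nil
    then show ?thesis using xv km by (simp add: cons_letter_def gmult_def)
  next
    case (Cons y u')
    obtain v' j where y: "y = (v',j)" by force
    have u': "u' \<in> reduced_words I m" and j: "0 < j" "j < m" using u Cons y by (auto simp: red_Cons)
    have gu': "gmult m u' w \<in> reduced_words I m" using gmult_red[OF u' w] .
    show ?thesis
    proof (cases "v' = v")
      case False
      then show ?thesis using xv km Cons y by (simp add: cons_letter_def gmult_def)
    next
      case True
      have comp: "cons_letter m (v,k) (cons_letter m (v,j) (gmult m u' w)) =
                  cons_letter m (v,k+j) (gmult m u' w)"
        using comp_letter[OF m gu'] .
      show ?thesis
      proof (cases "(k + j) mod m = 0")
        case z: True
        have "cons_letter m x u = u'" using xv km Cons y True z by (simp add: cons_letter_def)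
        moreover have "cons_letter m (v,k+j) (gmult m u' w) = gmult m u' w"
          using z by (simp add: cons_letter_0)
        ultimately show ?thesis using comp xv Cons y True by (simp add: gmult_Cons)
      next
        case nz: False
        have "cons_letter m x u = (v, (k+j) mod m) # u'" using xv km Cons y True nz
          by (simp add: cons_letter_def)
        then have "gmult m (cons_letter m x u) w = cons_letter m (v, (k+j) mod m) (gmult m u' w)"
          by (simp add: gmult_Cons)
        also have "\<dots> = cons_letter m (v, k+j) (gmult m u' w)" by (simp add: cons_letter_mod)
        finally show ?thesis using comp xv Cons y True by (simp add: gmult_Cons)
      qed
    qed
  qed
qed

lemma gmult_assoc:
  assumes "a \<in> reduced_words I m" "b \<in> reduced_words I m" "c \<in> reduced_words I m"
  shows "gmult m (gmult m a b) c = gmult m a (gmult m b c)"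
  using assms(1)
proof (induction a)
  case Nil then show ?case by (simp add: gmult_Nil)
next
  case (Cons x a)
  have a: "a \<in> reduced_words I m" and x: "fst x \<in> I" "0 < snd x" "snd x < m"
    using Cons.prems by (auto simp: red_Cons)
  have "gmult m (gmult m (x # a) b) c = gmult m (cons_letter m x (gmult m a b)) c"
    by (simp add: gmult_Cons)
  also have "\<dots> = cons_letter m x (gmult m (gmult m a b) c)"
    using act_cons[OF gmult_red[OF a assms(2)] assms(3) x] .
  also have "\<dots> = gmult m (x # a) (gmult m b c)" using Cons.IH[OF a] by (simp add: gmult_Cons)
  finally show ?case .
qed

lemma gmult_Nil_right: "a \<in> reduced_words I m \<Longrightarrow> gmult m a [] = a"
proof (induction a)
  case Nil then show ?case by (simp add: gmult_Nil)
next
  case (Cons x a)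
  then have a: "a \<in> reduced_words I m" and x: "0 < snd x" "snd x < m"
    and hd: "a = [] \<or> fst x \<noteq> fst (hd a)" by (auto simp: red_Cons)
  then show ?case using Cons.IH
    by (cases a; cases x) (auto simp: gmult_Cons cons_letter_def)
qed

lemma ginv_Cons: "ginv m (x # a) = ginv m a @ [(fst x, m - snd x)]"
  by (cases x) (simp add: ginv_def)

lemma ginv_red: "a \<in> reduced_words I m \<Longrightarrow> ginv m a \<in> reduced_words I m"
  by (auto simp: ginv_def reduced_words_def successively_map case_prod_beta
      elim!: successively_mono)

lemma ginv_ginv: "a \<in> reduced_words I m \<Longrightarrow> ginv m (ginv m a) = a"
  by (auto simp: ginv_def reduced_words_def rev_map intro!: map_idI)

lemma ginv_red_rev:
  assumes "ginv m w \<in> reduced_words I m"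
  shows "w \<in> reduced_words I m \<and> ginv m (ginv m w) = w"
proof -
  have "\<forall>(v,k)\<in>set w. v \<in> I \<and> 0 < k \<and> k < m" using assms
    by (fastforce simp: ginv_def reduced_words_def)
  moreover have "successively (\<lambda>x y. fst x \<noteq> fst y) w" using assms
    by (auto simp: ginv_def reduced_words_def successively_map case_prod_beta
      elim!: successively_mono)
  ultimately have "w \<in> reduced_words I m" by (simp add: reduced_words_def)
  then show ?thesis using ginv_ginv by blast
qed

lemma gmult_linv: "a \<in> reduced_words I m \<Longrightarrow> gmult m (ginv m a) a = []"
proof (induction a)
  case Nil then show ?case by (simp add: ginv_def gmult_Nil)
next
  case (Cons x a)
  obtain v k where xv: "x = (v,k)" by force
  have a: "a \<in> reduced_words I m" and k: "0 < k" "k < m" using Cons.prems xv by (auto simp: red_Cons)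
  have "cons_letter m (v, m - k) (x # a) = a" using xv k by (simp add: cons_letter_def)
  then show ?case using Cons.IH[OF a] xv
    by (simp add: ginv_Cons gmult_append gmult_Cons gmult_Nil)
qed

lemma gmult_rinv: "a \<in> reduced_words I m \<Longrightarrow> gmult m a (ginv m a) = []"
  using gmult_linv[OF ginv_red, of a I m] ginv_ginv[of a I m] by simp

lemma ginv_gmult:
  assumes a: "a \<in> reduced_words I m" and b: "b \<in> reduced_words I m"
  shows "ginv m (gmult m a b) = gmult m (ginv m b) (ginv m a)"
proof -
  define g where "g = gmult m a b"
  define h where "h = gmult m (ginv m b) (ginv m a)"
  have ia: "ginv m a \<in> reduced_words I m" and ib: "ginv m b \<in> reduced_words I m"
    using ginv_red a b by blast+
  have g: "g \<in> reduced_words I m" using gmult_red[OF a b] g_def by simp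
  have h: "h \<in> reduced_words I m" using gmult_red[OF ib ia] h_def by simp
  have "gmult m g h = gmult m a (gmult m b h)" using gmult_assoc[OF a b h] g_def by simp
  also have "gmult m b h = gmult m (gmult m b (ginv m b)) (ginv m a)"
    using gmult_assoc[OF b ib ia] h_def by simp
  also have "\<dots> = ginv m a" using gmult_rinv[OF b] by (simp add: gmult_Nil)
  finally have gh: "gmult m g h = []" using gmult_rinv[OF a] by simp
  have "h = gmult m (gmult m (ginv m g) g) h" using gmult_linv[OF g] by (simp add: gmult_Nil)
  also have "\<dots> = gmult m (ginv m g) (gmult m g h)" using gmult_assoc[OF ginv_red[OF g] g h] .
  also have "\<dots> = ginv m g" using gh gmult_Nil_right[OF ginv_red[OF g]] by simp
  finally show ?thesis using g_def h_def by simp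
qed



lemma carrier_zero: "ga_zero \<in> ga_carrier I m"
  by (simp add: ga_carrier_def ga_zero_def)

lemma carrier_add: "f \<in> ga_carrier I m \<Longrightarrow> g \<in> ga_carrier I m \<Longrightarrow> ga_add f g \<in> ga_carrier I m"
proof -
  assume f: "f \<in> ga_carrier I m" and g: "g \<in> ga_carrier I m"
  have "{w. ga_add f g w \<noteq> 0} \<subseteq> {w. f w \<noteq> 0} \<union> {w. g w \<noteq> 0}" by (auto simp: ga_add_def)
  then show ?thesis using f g unfolding ga_carrier_def
    by (auto intro: finite_subset simp: ga_add_def)
qed

lemma carrier_smult: "f \<in> ga_carrier I m \<Longrightarrow> ga_smult c f \<in> ga_carrier I m"
proof -
  assume f: "f \<in> ga_carrier I m"
  have "{w. ga_smult c f w \<noteq> 0} \<subseteq> {w. f w \<noteq> 0}" by (auto simp: ga_smult_def)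
  then show ?thesis using f unfolding ga_carrier_def
    by (auto intro: finite_subset simp: ga_smult_def)
qed

lemma carrier_delta: "x \<in> reduced_words I m \<Longrightarrow> ga_delta x \<in> ga_carrier I m"
proof -
  assume x: "x \<in> reduced_words I m"
  have "{w. ga_delta x w \<noteq> (0::complex)} \<subseteq> {x}" by (auto simp: ga_delta_def)
  then show ?thesis using x unfolding ga_carrier_def
    by (auto intro: finite_subset simp: ga_delta_def split: if_splits)
qed

lemma carrier_sum: "finite A \<Longrightarrow> (\<And>x. x \<in> A \<Longrightarrow> F x \<in> ga_carrier I m) \<Longrightarrow> ga_sum A F \<in> ga_carrier I m"
proof (induction A rule: finite_induct)
  case empty
  then show ?case using carrier_zero by (simp add: ga_sum_def ga_zero_def)
next
  case (insert x A)
  have "ga_sum (insert x A) F = ga_add (F x) (ga_sum A F)"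
    using insert.hyps by (simp add: ga_sum_def ga_add_def fun_eq_iff)
  show ?case unfolding \<open>ga_sum (insert x A) F = ga_add (F x) (ga_sum A F)\<close>
    by (rule carrier_add) (use insert in auto)
qed

lemma mult_supp:
  "{w. ga_mult m f g w \<noteq> 0} \<subseteq> (\<lambda>(a,b). gmult m a b) ` ({a. f a \<noteq> 0} \<times> {b. g b \<noteq> 0})"
proof
  fix w assume w: "w \<in> {w. ga_mult m f g w \<noteq> 0}"
  let ?S = "{(a,b). f a \<noteq> 0 \<and> g b \<noteq> 0 \<and> gmult m a b = w}"
  have "?S \<noteq> {}"
  proof
    assume "?S = {}"
    then have "ga_mult m f g w = 0" unfolding ga_mult_def \<open>?S = {}\<close> by (simp only: sum.empty)
    then show False using w by simp
  qed
  then obtain a b where ab: "(a,b) \<in> ?S" by auto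
  then have "(a,b) \<in> {a. f a \<noteq> 0} \<times> {b. g b \<noteq> 0}" "w = gmult m a b" by auto
  then show "w \<in> (\<lambda>(a,b). gmult m a b) ` ({a. f a \<noteq> 0} \<times> {b. g b \<noteq> 0})"
    by (metis (no_types, lifting) case_prod_conv image_eqI)
qed

lemma carrier_mult: "f \<in> ga_carrier I m \<Longrightarrow> g \<in> ga_carrier I m \<Longrightarrow> ga_mult m f g \<in> ga_carrier I m"
proof -
  assume f: "f \<in> ga_carrier I m" and g: "g \<in> ga_carrier I m"
  have fin: "finite ((\<lambda>(a,b). gmult m a b) ` ({a. f a \<noteq> 0} \<times> {b. g b \<noteq> 0}))"
    using f g unfolding ga_carrier_def by (intro finite_imageI finite_cartesian_product) auto
  have red: "\<forall>w. ga_mult m f g w \<noteq> 0 \<longrightarrow> w \<in> reduced_words I m"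
  proof (intro allI impI)
    fix w assume "ga_mult m f g w \<noteq> 0"
    then have "w \<in> (\<lambda>(a,b). gmult m a b) ` ({a. f a \<noteq> 0} \<times> {b. g b \<noteq> 0})"
      using mult_supp[of m f g] by blast
    then obtain a b where ab: "f a \<noteq> 0" "g b \<noteq> 0" "w = gmult m a b" by auto
    have "a \<in> reduced_words I m" using f ab(1) unfolding ga_carrier_def by blast
    moreover have "b \<in> reduced_words I m" using g ab(2) unfolding ga_carrier_def by blast
    ultimately show "w \<in> reduced_words I m" using ab(3) gmult_red by blast
  qed
  show ?thesis using finite_subset[OF mult_supp fin] red by (simp add: ga_carrier_def)
qed

lemma carrier_pow: "f \<in> ga_carrier I m \<Longrightarrow> ga_pow m f k \<in> ga_carrier I m"
  by (induction k) (auto simp: ga_one_def carrier_delta carrier_mult)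

lemma carrier_star: "f \<in> ga_carrier I m \<Longrightarrow> ga_star m f \<in> ga_carrier I m"
proof -
  assume f: "f \<in> ga_carrier I m"
  have sub: "{w. ga_star m f w \<noteq> 0} \<subseteq> ginv m ` {w. f w \<noteq> 0}"
  proof
    fix w assume "w \<in> {w. ga_star m f w \<noteq> 0}"
    then have "f (ginv m w) \<noteq> 0" by (simp add: ga_star_def)
    then have "ginv m w \<in> reduced_words I m" using f by (simp add: ga_carrier_def)
    then have "ginv m (ginv m w) = w" using ginv_red_rev by blast
    then show "w \<in> ginv m ` {w. f w \<noteq> 0}" using \<open>f (ginv m w) \<noteq> 0\<close> by force
  qed
  have red: "\<forall>w. ga_star m f w \<noteq> 0 \<longrightarrow> w \<in> reduced_words I m"
    using f ginv_red_rev by (auto simp: ga_carrier_def ga_star_def)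
  show ?thesis using finite_subset[OF sub] f red by (simp add: ga_carrier_def)
qed

lemma star_star: "f \<in> ga_carrier I m \<Longrightarrow> ga_star m (ga_star m f) = f"
proof (rule ext)
  fix w assume f: "f \<in> ga_carrier I m"
  show "ga_star m (ga_star m f) w = f w"
  proof (cases "f (ginv m (ginv m w)) = 0")
    case True
    then show ?thesis using f ginv_ginv[of w I m]
      by (cases "w \<in> reduced_words I m") (auto simp: ga_star_def ga_carrier_def)
  next
    case False
    then have "ginv m (ginv m w) \<in> reduced_words I m" using f by (simp add: ga_carrier_def)
    then have "ginv m w \<in> reduced_words I m" using ginv_red_rev by blast
    then have "ginv m (ginv m w) = w" using ginv_red_rev by blast
    then show ?thesis by (simp add: ga_star_def)
  qed
qed

lemma star_mult:
  assumes f: "f \<in> ga_carrier I m" and g: "g \<in> ga_carrier I m"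
  shows "ga_star m (ga_mult m g f) = ga_mult m (ga_star m f) (ga_star m g)"
proof (rule ext)
  fix w
  define S1 where "S1 = {(a,b). g a \<noteq> 0 \<and> f b \<noteq> 0 \<and> gmult m a b = ginv m w}"
  define S2 where "S2 = {(c,d). cnj (f (ginv m c)) \<noteq> 0 \<and> cnj (g (ginv m d)) \<noteq> 0 \<and> gmult m c d = w}"
  have L: "ga_star m (ga_mult m g f) w = (\<Sum>(a,b)\<in>S1. cnj (g a * f b))"
    by (simp add: ga_star_def ga_mult_def S1_def cnj_sum case_prod_beta)
  have R: "ga_mult m (ga_star m f) (ga_star m g) w = (\<Sum>(c,d)\<in>S2. cnj (f (ginv m c)) * cnj (g (ginv m d)))"
    by (simp add: ga_star_def ga_mult_def S2_def)
  have "(\<Sum>(c,d)\<in>S2. cnj (f (ginv m c)) * cnj (g (ginv m d))) = (\<Sum>(a,b)\<in>S1. cnj (g a * f b))"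
  proof (rule sum.reindex_bij_witness[where j = "\<lambda>(c,d). (ginv m d, ginv m c)"
        and i = "\<lambda>(a,b). (ginv m b, ginv m a)"])
    fix p assume p: "p \<in> S2"
    obtain c d where cd: "p = (c,d)" by force
    have c: "ginv m c \<in> reduced_words I m" and d: "ginv m d \<in> reduced_words I m"
      using p cd f g by (auto simp: S2_def ga_carrier_def)
    have c': "c \<in> reduced_words I m" "ginv m (ginv m c) = c" using ginv_red_rev[OF c] by auto
    have d': "d \<in> reduced_words I m" "ginv m (ginv m d) = d" using ginv_red_rev[OF d] by auto
    show "(case (case p of (c, d) \<Rightarrow> (ginv m d, ginv m c)) of (a, b) \<Rightarrow> (ginv m b, ginv m a)) = p"
      using cd c' d' by simp
    show "(case p of (c, d) \<Rightarrow> (ginv m d, ginv m c)) \<in> S1"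
      using cd p ginv_gmult[OF c'(1) d'(1)] by (auto simp: S2_def S1_def)
    show "(case (case p of (c, d) \<Rightarrow> (ginv m d, ginv m c)) of (a, b) \<Rightarrow> cnj (g a * f b)) =
          (case p of (c, d) \<Rightarrow> cnj (f (ginv m c)) * cnj (g (ginv m d)))"
      using cd by simp
  next
    fix p assume p: "p \<in> S1"
    obtain a b where ab: "p = (a,b)" by force
    have a: "a \<in> reduced_words I m" and b: "b \<in> reduced_words I m"
      using p ab f g by (auto simp: S1_def ga_carrier_def)
    have "gmult m a b \<in> reduced_words I m" using gmult_red[OF a b] .
    then have w: "ginv m w \<in> reduced_words I m" using p ab by (simp add: S1_def)
    show "(case (case p of (a, b) \<Rightarrow> (ginv m b, ginv m a)) of (c, d) \<Rightarrow> (ginv m d, ginv m c)) = p"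
      using ab ginv_ginv[OF a] ginv_ginv[OF b] by simp
    show "(case p of (a, b) \<Rightarrow> (ginv m b, ginv m a)) \<in> S2"
      using ab p ginv_ginv[OF a] ginv_ginv[OF b] ginv_gmult[OF a b] ginv_red_rev[OF w]
      by (auto simp: S2_def S1_def)
  qed
  then show "ga_star m (ga_mult m g f) w = ga_mult m (ga_star m f) (ga_star m g) w"
    using L R by simp
qed


lemma gen_u_carrier: "v \<in> I \<Longrightarrow> 0 < m \<Longrightarrow> gen_u m v \<in> ga_carrier I m"
  unfolding gen_u_def by (intro carrier_delta cons_letter_red) auto

lemma proj_e_carrier: "v \<in> I \<Longrightarrow> 0 < m \<Longrightarrow> proj_e m v a \<in> ga_carrier I m"
  unfolding proj_e_def
  by (intro carrier_smult carrier_sum carrier_pow gen_u_carrier) auto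

lemma ideal_carrier:
  assumes "S \<subseteq> ga_carrier I m"
  shows "x \<in> ga_ideal I m S \<Longrightarrow> x \<in> ga_carrier I m"
  by (induction rule: ga_ideal.induct)
     (use assms in \<open>auto intro: carrier_zero carrier_add carrier_smult carrier_mult carrier_star\<close>)

lemma game_ideal_carrier:
  assumes "0 < m"
  shows "game_ideal I m lam \<subseteq> ga_carrier I m"
proof -
  have "{ga_mult m (proj_e m v a) (proj_e m w b) | v w a b.
        v \<in> I \<and> w \<in> I \<and> a < m \<and> b < m \<and> \<not> lam v w a b} \<subseteq> ga_carrier I m"
    using assms by (auto intro!: carrier_mult proj_e_carrier)
  then show ?thesis unfolding game_ideal_def using ideal_carrier by blast
qed

lemma star_add: "ga_star m (ga_add x y) = ga_add (ga_star m x) (ga_star m y)"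
  by (simp add: ga_star_def ga_add_def fun_eq_iff)

lemma star_zero: "ga_star m ga_zero = ga_zero"
  by (simp add: ga_star_def ga_zero_def fun_eq_iff)

lemma cone_sa: "p \<in> ga_cone I m \<Longrightarrow> self_adjoint I m p"
proof (induction rule: ga_cone.induct)
  case zero
  then show ?case by (simp add: self_adjoint_def carrier_zero star_zero)
next
  case (step f p)
  have c: "ga_mult m (ga_star m f) f \<in> ga_carrier I m"
    using step by (intro carrier_mult carrier_star)
  have s: "ga_star m (ga_mult m (ga_star m f) f) = ga_mult m (ga_star m f) f"
    using star_mult[OF step(1) carrier_star[OF step(1)]] star_star[OF step(1)] by simp
  show ?case using c s step.IH carrier_add star_add unfolding self_adjoint_def by metis
qed

lemma sa_add: "self_adjoint I m x \<Longrightarrow> self_adjoint I m y \<Longrightarrow> self_adjoint I m (ga_add x y)"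
  unfolding self_adjoint_def using carrier_add star_add by metis

lemma coset_self: "ga_zero \<in> J \<Longrightarrow> x \<in> ga_coset J x"
  unfolding ga_coset_def by (rule CollectI, rule exI[of _ ga_zero]) (simp add: ga_add_def ga_zero_def)

locale jsp =
  fixes J :: "'i ga set"
  assumes jz: "ga_zero \<in> J" and ja: "\<And>x y. x \<in> J \<Longrightarrow> y \<in> J \<Longrightarrow> ga_add x y \<in> J"
    and js: "\<And>c x. x \<in> J \<Longrightarrow> ga_smult c x \<in> J"
begin

lemma coset_eq:
  assumes d: "ga_add x (ga_smult (-1) x') \<in> J"
  shows "ga_coset J x = ga_coset J x'"
proof -
  define d where "d = ga_add x (ga_smult (-1) x')"
  have dJ: "d \<in> J" using d d_def by simp
  show ?thesis
  proof (intro set_eqI iffI)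
    fix z assume "z \<in> ga_coset J x"
    then obtain y where y: "y \<in> J" "z = ga_add x y" by (auto simp: ga_coset_def)
    have "z = ga_add x' (ga_add d y)" using y d_def by (simp add: ga_add_def ga_smult_def fun_eq_iff)
    then show "z \<in> ga_coset J x'" using ja[OF dJ y(1)] by (auto simp: ga_coset_def)
  next
    fix z assume "z \<in> ga_coset J x'"
    then obtain y where y: "y \<in> J" "z = ga_add x' y" by (auto simp: ga_coset_def)
    have "z = ga_add x (ga_add y (ga_smult (-1) d))" using y d_def
      by (simp add: ga_add_def ga_smult_def fun_eq_iff)
    then show "z \<in> ga_coset J x" using ja[OF y(1) js[OF dJ]] by (auto simp: ga_coset_def)
  qed
qed

lemma coset_J: "x \<in> J \<Longrightarrow> ga_coset J x = ga_coset J ga_zero"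
  by (rule coset_eq) (simp add: ga_zero_def ga_smult_def ga_add_def fun_eq_iff)

lemma coset_zero: "ga_coset J ga_zero = J"
  unfolding ga_coset_def by (auto simp: ga_add_def ga_zero_def)

lemma coset_neg: "(\<lambda>z. ga_smult (-1) z) ` ga_coset J q = ga_coset J (ga_smult (-1) q)"
proof (intro set_eqI iffI)
  fix z assume "z \<in> (\<lambda>z. ga_smult (-1) z) ` ga_coset J q"
  then obtain y where y: "y \<in> J" "z = ga_smult (-1) (ga_add q y)" by (auto simp: ga_coset_def)
  have "z = ga_add (ga_smult (-1) q) (ga_smult (-1) y)" using y
    by (simp add: ga_add_def ga_smult_def fun_eq_iff)
  then show "z \<in> ga_coset J (ga_smult (-1) q)" using js[OF y(1)] by (auto simp: ga_coset_def)
next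
  fix z assume "z \<in> ga_coset J (ga_smult (-1) q)"
  then obtain y where y: "y \<in> J" "z = ga_add (ga_smult (-1) q) y" by (auto simp: ga_coset_def)
  have "z = ga_smult (-1) (ga_add q (ga_smult (-1) y))" using y
    by (simp add: ga_add_def ga_smult_def fun_eq_iff)
  moreover have "ga_add q (ga_smult (-1) y) \<in> ga_coset J q" using js[OF y(1)] by (auto simp: ga_coset_def)
  ultimately show "z \<in> (\<lambda>z. ga_smult (-1) z) ` ga_coset J q" by blast
qed

end

theorem mainTheorem11:
  fixes I :: "'i set" and m :: nat and lam :: "'i \<Rightarrow> 'i \<Rightarrow> nat \<Rightarrow> nat \<Rightarrow> bool"
  assumes "finite I" and "m \<ge> 1"
    and "\<forall>v\<in>I. \<forall>a<m. \<forall>b<m. lam v v a b \<longleftrightarrow> a = b"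
  shows "hereditary_subspace I m (game_ideal I m lam) \<longleftrightarrow>
         quot_pos I m (game_ideal I m lam) \<inter> quot_neg (quot_pos I m (game_ideal I m lam))
           = {ga_coset (game_ideal I m lam) ga_zero}"
proof -
  define J where "J = game_ideal I m lam"
  have m: "0 < m" using assms(2) by simp
  have Jc: "J \<subseteq> ga_carrier I m" using game_ideal_carrier[OF m] J_def by simp
  have Jz: "ga_zero \<in> J" unfolding J_def game_ideal_def by (rule ga_ideal.zero)
  have Ja: "\<And>x y. x \<in> J \<Longrightarrow> y \<in> J \<Longrightarrow> ga_add x y \<in> J"
    unfolding J_def game_ideal_def by (rule ga_ideal.add)
  have Js: "\<And>c x. x \<in> J \<Longrightarrow> ga_smult c x \<in> J"
    unfolding J_def game_ideal_def by (rule ga_ideal.smult)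
  have Jst: "\<And>x. x \<in> J \<Longrightarrow> ga_star m x \<in> J"
    unfolding J_def game_ideal_def by (rule ga_ideal.star)
  interpret jsp J using Jz Ja Js by unfold_locales
  have neg0: "ga_smult (-1) ga_zero = (ga_zero :: 'i ga)" by (simp add: ga_smult_def ga_zero_def)
  have add0: "\<And>f. ga_add f (ga_smult (-1) ga_zero) = f" by (simp add: ga_smult_def ga_add_def ga_zero_def)
  have "hereditary_subspace I m J \<longleftrightarrow>
        quot_pos I m J \<inter> quot_neg (quot_pos I m J) = {ga_coset J ga_zero}"
  proof
    assume H: "hereditary_subspace I m J"
    show "quot_pos I m J \<inter> quot_neg (quot_pos I m J) = {ga_coset J ga_zero}"
    proof (intro set_eqI iffI)
      fix C assume C: "C \<in> quot_pos I m J \<inter> quot_neg (quot_pos I m J)"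
      then obtain p where p: "p \<in> ga_cone I m" "C = ga_coset J p" by (auto simp: quot_pos_def)
      from C obtain q where q: "q \<in> ga_cone I m" "C = (\<lambda>z. ga_smult (-1) z) ` ga_coset J q"
        by (auto simp: quot_pos_def quot_neg_def)
      have "p \<in> ga_coset J (ga_smult (-1) q)" using coset_self[OF Jz, of p] p q coset_neg by simp
      then obtain y where y: "y \<in> J" "p = ga_add (ga_smult (-1) q) y" by (auto simp: ga_coset_def)
      have pq: "ga_add p q = y" using y(2) by (simp add: ga_add_def ga_smult_def fun_eq_iff)
      have "p \<in> J"
      proof -
        have "ga_le I m ga_zero p" unfolding ga_le_def add0 by (rule p(1))
        moreover have "ga_add (ga_add p q) (ga_smult (-1) p) = q"
          by (simp add: ga_add_def ga_smult_def fun_eq_iff)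
        then have "ga_le I m p (ga_add p q)" unfolding ga_le_def using q(1) by simp
        moreover have "self_adjoint I m p" "self_adjoint I m (ga_add p q)"
          using cone_sa p(1) q(1) sa_add by blast+
        ultimately show ?thesis using H pq y(1) unfolding hereditary_subspace_def by blast
      qed
      then show "C \<in> {ga_coset J ga_zero}" using p coset_J by simp
    next
      fix C assume "C \<in> {ga_coset J ga_zero}"
      then have C: "C = ga_coset J ga_zero" by simp
      have "C \<in> quot_pos I m J" using C ga_cone.zero by (auto simp: quot_pos_def)
      moreover have "C = (\<lambda>z. ga_smult (-1) z) ` ga_coset J ga_zero" using C coset_neg neg0 by simp
      ultimately show "C \<in> quot_pos I m J \<inter> quot_neg (quot_pos I m J)"
        using ga_cone.zero by (auto simp: quot_pos_def quot_neg_def)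
    qed
  next
    assume E: "quot_pos I m J \<inter> quot_neg (quot_pos I m J) = {ga_coset J ga_zero}"
    show "hereditary_subspace I m J"
      unfolding hereditary_subspace_def
    proof (intro conjI ballI allI impI)
      show "J \<subseteq> ga_carrier I m" by (rule Jc)
      show "ga_zero \<in> J" by (rule Jz)
    next
      fix x y assume "x \<in> J" "y \<in> J" then show "ga_add x y \<in> J" by (rule Ja)
    next
      fix c x assume "x \<in> J" then show "ga_smult c x \<in> J" by (rule Js)
    next
      fix x assume "x \<in> J" then show "ga_star m x \<in> J" by (rule Jst)
    next
      fix f h assume A: "self_adjoint I m f \<and> self_adjoint I m h \<and> ga_le I m ga_zero f \<and> ga_le I m f h \<and> h \<in> J"
      define q where "q = ga_add h (ga_smult (-1) f)"
      have f: "f \<in> ga_cone I m" using A unfolding ga_le_def add0 by simp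
      have q: "q \<in> ga_cone I m" using A q_def by (simp add: ga_le_def)
      have "ga_add f (ga_smult (-1) (ga_smult (-1) q)) = h" using q_def
        by (simp add: ga_add_def ga_smult_def fun_eq_iff)
      then have "ga_coset J f = ga_coset J (ga_smult (-1) q)" using A coset_eq by simp
      then have "ga_coset J f = (\<lambda>z. ga_smult (-1) z) ` ga_coset J q" using coset_neg by simp
      then have "ga_coset J f \<in> quot_pos I m J \<inter> quot_neg (quot_pos I m J)"
        using f q by (auto simp: quot_pos_def quot_neg_def)
      then have "ga_coset J f = ga_coset J ga_zero" using E by simp
      then show "f \<in> J" using coset_self[OF Jz, of f] coset_zero by simp
    qed
  qed
  then show ?thesis using J_def by simp
qed

end
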